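(* Let $P$ be a discrete Dubins path, let $ab$ be a long edge of $P$ (traversed from $a$ to $b$), and let $P'$ be the part of $P$ from $b$ to its last vertex. For $\varepsilon\in[0,1]$ let $P(\varepsilon)$ be the path obtained from $P$ by rigidly translating $P'$ by the vector $\varepsilon(a-b)$ (towards $a$ along $ab$ by distance $\varepsilon|ab|$), so that the edge $ab$ is replaced by the segment from $a$ to $b+\varepsilon(a-b)$. Then there exists $\varepsilon>0$ such that $P(\varepsilon)$ is a discrete curvature-constrained path.
   Context: Fix an angle $\theta$ with $0\le\theta\le\pi/2$ such that $2\pi/\theta$ is an integer, and a length $\ell>0$. For a polygonal path, the turn at an internal vertex is the angle in $[0,\pi]$ between the direction of the incoming edge and the direction of the outgoing edge. An edge is short if its length is $<\ell$, normal if $=\ell$, long if $>\ell$. An edge $e$ with an adjacent edge at each end is an inflection edge if its two adjacent edges lie on opposite sides of the supporting line of $e$, and non-inflection otherwise. A discrete curvature-constrained path is a polygonal path such that: (i) the turn at every internal vertex is at most $\theta$; (ii) no two adjacent edges are both short; (iii) for every short non-inflection edge $ab$ with adjacent edges $a^-a$ and $bb^+$, the angle between the directions $\overrightarrow{a^-a}$ and $\overrightarrow{bb^+}$ is at most $\theta$. A configuration is a pair $(u,U)$ of a point $u$ and a vector $U$ of length $\ell$. A polygonal path $P$ with first vertex $u$ starts at $(u,U)$ if prepending the segment from $u-U$ to $u$ (the pre-edge) yields a discrete curvature-constrained path; $P$ with last vertex $v$ ends at $(v,V)$ if appending the segment from $v$ to $v+V$ (the post-edge) yields a discrete curvature-constrained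 path. A discrete Dubins path is a discrete curvature-constrained path of minimum length among all those starting at a given configuration $\mathcal U$ and ending at a given configuration $\mathcal V$. Standing assumption: paths make a non-zero turn at every internal vertex. *)

theory Defs
  imports "HOL-Analysis.Analysis"
begin

text \<open>Points in the Euclidean plane are elements of real^2. A polygonal path is the
  (non-empty) list of its vertices; its edges join consecutive vertices.\<close>

type_synonym pt = "real^2"

definition vec_angle :: "pt \<Rightarrow> pt \<Rightarrow> real" where
  "vec_angle u v = arccos ((u \<bullet> v) / (norm u * norm v))"

text \<open>Signed cross product; its sign tells on which side of the line through a with
  direction d the point a + w lies.\<close>
definition cross2 :: "pt \<Rightarrow> pt \<Rightarrow> real" where
  "cross2 d w = d$1 * w$2 - d$2 * w$1"

definition turn :: "pt list \<Rightarrow> nat \<Rightarrow> real" where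
  "turn ps i = vec_angle (ps!i - ps!(i-1)) (ps!(i+1) - ps!i)"

definition edge_len :: "pt list \<Rightarrow> nat \<Rightarrow> real" where
  "edge_len ps i = dist (ps!i) (ps!(i+1))"

text \<open>Edge i (having an adjacent edge at each end, i.e. 0 < i and i+2 < length ps)
  is an inflection edge if its two adjacent edges lie (strictly) on opposite sides of
  its supporting line.\<close>
definition inflection_edge :: "pt list \<Rightarrow> nat \<Rightarrow> bool" where
  "inflection_edge ps i \<longleftrightarrow>
     cross2 (ps!(i+1) - ps!i) (ps!(i-1) - ps!i) * cross2 (ps!(i+1) - ps!i) (ps!(i+2) - ps!i) < 0"

definition polygonal_path :: "pt list \<Rightarrow> bool" where
  "polygonal_path ps \<longleftrightarrow> ps \<noteq> [] \<and> (\<forall>i. i + 1 < length ps \<longrightarrow> ps!i \<noteq> ps!(i+1))"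

definition dcc_path :: "real \<Rightarrow> real \<Rightarrow> pt list \<Rightarrow> bool" where
  "dcc_path \<theta> l ps \<longleftrightarrow> polygonal_path ps
     \<and> (\<forall>i. 0 < i \<and> i + 1 < length ps \<longrightarrow> turn ps i \<le> \<theta>)
     \<and> (\<forall>i. i + 2 < length ps \<longrightarrow> \<not> (edge_len ps i < l \<and> edge_len ps (i+1) < l))
     \<and> (\<forall>i. 0 < i \<and> i + 2 < length ps \<and> edge_len ps i < l \<and> \<not> inflection_edge ps i \<longrightarrow>
           vec_angle (ps!i - ps!(i-1)) (ps!(i+2) - ps!(i+1)) \<le> \<theta>)"

definition nonzero_turns :: "pt list \<Rightarrow> bool" where
  "nonzero_turns ps \<longleftrightarrow> (\<forall>i. 0 < i \<and> i + 1 < length ps \<longrightarrow> turn ps i \<noteq> 0)"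

definition path_length :: "pt list \<Rightarrow> real" where
  "path_length ps = (\<Sum>i<length ps - 1. edge_len ps i)"

definition starts_at :: "real \<Rightarrow> real \<Rightarrow> pt list \<Rightarrow> pt \<Rightarrow> pt \<Rightarrow> bool" where
  "starts_at \<theta> l ps u U \<longleftrightarrow> ps \<noteq> [] \<and> hd ps = u \<and> dcc_path \<theta> l ((u - U) # ps)"

definition ends_at :: "real \<Rightarrow> real \<Rightarrow> pt list \<Rightarrow> pt \<Rightarrow> pt \<Rightarrow> bool" where
  "ends_at \<theta> l ps v V \<longleftrightarrow> ps \<noteq> [] \<and> last ps = v \<and> dcc_path \<theta> l (ps @ [v + V])"

definition discrete_dubins :: "real \<Rightarrow> real \<Rightarrow> pt \<Rightarrow> pt \<Rightarrow> pt \<Rightarrow> pt \<Rightarrow> pt list \<Rightarrow> bool" where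
  "discrete_dubins \<theta> l u U v V ps \<longleftrightarrow>
     norm U = l \<and> norm V = l \<and>
     dcc_path \<theta> l ps \<and> starts_at \<theta> l ps u U \<and> ends_at \<theta> l ps v V \<and>
     (\<forall>qs. dcc_path \<theta> l qs \<and> starts_at \<theta> l qs u U \<and> ends_at \<theta> l qs v V
            \<longrightarrow> path_length ps \<le> path_length qs)"

definition shift_after :: "pt list \<Rightarrow> nat \<Rightarrow> real \<Rightarrow> pt list" where
  "shift_after ps i eps =
     take (i+1) ps @ map (\<lambda>p. p + eps *\<^sub>R (ps!i - ps!(i+1))) (drop (i+1) ps)"

end

theory Submission
  imports Defs
begin

lemma vec_angle_scaleL: "a > 0 \<Longrightarrow> vec_angle (a *\<^sub>R u) v = vec_angle u v"
  by (simp add: vec_angle_def mult.assoc)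

lemma vec_angle_scaleR: "a > 0 \<Longrightarrow> vec_angle u (a *\<^sub>R v) = vec_angle u v"
  by (simp add: vec_angle_def mult.assoc mult.left_commute[of a])

lemma cross2_scaleL[simp]: "cross2 (a *\<^sub>R u) w = a * cross2 u w"
  by (simp add: cross2_def algebra_simps)
lemma cross2_scaleR[simp]: "cross2 u (a *\<^sub>R w) = a * cross2 u w"
  by (simp add: cross2_def algebra_simps)
lemma cross2_add[simp]: "cross2 u (v + w) = cross2 u v + cross2 u w"
  by (simp add: cross2_def algebra_simps)
lemma cross2_neg[simp]: "cross2 u (- w) = - cross2 u w"
  by (simp add: cross2_def algebra_simps)
lemma cross2_self[simp]: "cross2 u u = 0"
  by (simp add: cross2_def algebra_simps)

lemma cross2_key: "cross2 (a *\<^sub>R B) (-(c *\<^sub>R A)) * cross2 (a *\<^sub>R B) (a *\<^sub>R B + d *\<^sub>R C)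
   = (a*a*c*d) * (cross2 B (-A) * cross2 B (B + C))"
  by (simp add: cross2_def algebra_simps)

lemma neg_less_pos_iff: "(c::real) > 0 \<Longrightarrow> x = c * y \<Longrightarrow> (x < 0) = (y < 0)"
  by (simp add: mult_less_0_iff)

lemma edge_len_diff: "edge_len ps k = norm (ps!(k+1) - ps!k)"
  by (simp add: edge_len_def dist_norm norm_minus_commute)

lemma dcc_transfer:
  assumes len: "length qs = length ps" and d: "dcc_path \<theta> l ps"
    and f: "\<And>k. k+1 < length ps \<Longrightarrow> f k > 0 \<and> qs!(k+1) - qs!k = f k *\<^sub>R (ps!(k+1) - ps!k)"
    and sh: "\<And>k. k+1 < length ps \<Longrightarrow> (edge_len qs k < l) = (edge_len ps k < l)"
  shows "dcc_path \<theta> l qs"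
proof -
  have pp: "polygonal_path ps" using d by (simp add: dcc_path_def)
  have pq: "polygonal_path qs"
    unfolding polygonal_path_def
  proof (intro conjI allI impI)
    show "qs \<noteq> []" using pp len by (auto simp: polygonal_path_def)
    fix k assume k: "k + 1 < length qs"
    have "ps!k \<noteq> ps!(k+1)" using pp k len by (auto simp: polygonal_path_def)
    hence "ps!(k+1) - ps!k \<noteq> 0" by simp
    with f[of k] k len have "qs!(k+1) - qs!k \<noteq> 0" by auto
    thus "qs!k \<noteq> qs!(k+1)" by simp
  qed
  have dm: "\<And>j. 0 < j \<Longrightarrow> j < length ps \<Longrightarrow> qs!j - qs!(j-1) = f (j-1) *\<^sub>R (ps!j - ps!(j-1))"
    using f by (metis Suc_pred' add.commute plus_1_eq_Suc)
  have fp: "\<And>j. 0 < j \<Longrightarrow> j < length ps \<Longrightarrow> f (j-1) > 0"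
    using f by (metis Suc_pred' add.commute plus_1_eq_Suc)
  have turn: "turn qs j = turn ps j" if j: "0 < j" "j + 1 < length ps" for j
  proof -
    have "turn qs j = vec_angle (f (j-1) *\<^sub>R (ps!j - ps!(j-1))) (f j *\<^sub>R (ps!(j+1) - ps!j))"
      unfolding turn_def using dm[of j] f[of j] j by simp
    also have "\<dots> = turn ps j" unfolding turn_def
      using fp[of j] f[of j] j by (simp add: vec_angle_scaleL vec_angle_scaleR)
    finally show ?thesis .
  qed
  have infl: "inflection_edge qs j = inflection_edge ps j" if j: "0 < j" "j + 2 < length ps" for j
  proof -
    let ?D0 = "ps!j - ps!(j-1)" and ?D1 = "ps!(j+1) - ps!j" and ?D2 = "ps!(j+2) - ps!(j+1)"
    have e0: "qs!(j-1) - qs!j = - (f (j-1) *\<^sub>R ?D0)" using dm[of j] j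
      by (metis add_lessD1 minus_diff_eq)
    have e1: "qs!(j+1) - qs!j = f j *\<^sub>R ?D1" using f[of j] j by simp
    have e2: "qs!(j+2) - qs!(j+1) = f (j+1) *\<^sub>R ?D2" using f[of "j+1"] j
      by (simp add: add.assoc)
    have e12: "qs!(j+2) - qs!j = f j *\<^sub>R ?D1 + f (j+1) *\<^sub>R ?D2"
      using e1 e2 by (metis add.commute diff_add_eq diff_diff_eq2 diff_add_cancel)
    have p0: "ps!(j-1) - ps!j = - ?D0" by simp
    have p12: "ps!(j+2) - ps!j = ?D1 + ?D2" by simp
    have pos: "f j * f j * f (j-1) * f (j+1) > 0"
      using f[of j] f[of "j+1"] fp[of j] j by simp
    have "cross2 (qs!(j+1) - qs!j) (qs!(j-1) - qs!j) * cross2 (qs!(j+1) - qs!j) (qs!(j+2) - qs!j)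
        = (f j * f j * f (j-1) * f (j+1)) *
          (cross2 (ps!(j+1) - ps!j) (ps!(j-1) - ps!j) * cross2 (ps!(j+1) - ps!j) (ps!(j+2) - ps!j))"
      unfolding e0 e1 e12 p0 p12 by (rule cross2_key)
    with pos show ?thesis unfolding inflection_edge_def
      by (metis neg_less_pos_iff)
  qed
  have ang: "vec_angle (qs!j - qs!(j-1)) (qs!(j+2) - qs!(j+1)) = vec_angle (ps!j - ps!(j-1)) (ps!(j+2) - ps!(j+1))"
    if j: "0 < j" "j + 2 < length ps" for j
  proof -
    have e2: "qs!(j+2) - qs!(j+1) = f (j+1) *\<^sub>R (ps!(j+2) - ps!(j+1))" using f[of "j+1"] j
      by (simp add: add.assoc)
    show ?thesis unfolding e2 dm[of j, OF j(1)] using j dm fp[of j] f[of "j+1"]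
      by (simp add: vec_angle_scaleL vec_angle_scaleR)
  qed
  show ?thesis
    unfolding dcc_path_def
  proof (intro conjI allI impI)
    show "polygonal_path qs" by fact
  next
    fix j assume "0 < j \<and> j + 1 < length qs"
    thus "turn qs j \<le> \<theta>" using turn[of j] d len by (auto simp: dcc_path_def)
  next
    fix j assume j: "j + 2 < length qs"
    show "\<not> (edge_len qs j < l \<and> edge_len qs (j+1) < l)"
      using j d len sh[of j] sh[of "j+1"] by (auto simp: dcc_path_def)
  next
    fix j assume j: "0 < j \<and> j + 2 < length qs \<and> edge_len qs j < l \<and> \<not> inflection_edge qs j"
    thus "vec_angle (qs!j - qs!(j-1)) (qs!(j+2) - qs!(j+1)) \<le> \<theta>"
      using ang[of j] infl[of j] sh[of j] d len by (auto simp: dcc_path_def)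
  qed
qed

lemma shift_nth:
  assumes "i + 1 < length ps" "k < length ps"
  shows "shift_after ps i e ! k = (if k \<le> i then ps!k else ps!k + e *\<^sub>R (ps!i - ps!(i+1)))"
  using assms by (auto simp: shift_after_def nth_append min_def)

theorem lemma6:
  fixes \<theta> l :: real and u U v V :: pt and ps :: "pt list" and i :: nat
  assumes "0 < \<theta>" and "\<theta> \<le> pi / 2" and "2 * pi / \<theta> \<in> \<int>" and "0 < l"
    and "discrete_dubins \<theta> l u U v V ps"
    and "nonzero_turns ps"
    and "i + 1 < length ps" and "edge_len ps i > l"
  shows "\<exists>eps>0. eps \<le> 1 \<and> dcc_path \<theta> l (shift_after ps i eps)"
proof -
  define L where "L = edge_len ps i"
  define eps where "eps = (L - l) / (2 * L)"
  have Lp: "L > l" using assms(8) L_def by simp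
  have Lpos: "L > 0" using Lp assms(4) by simp
  have ep: "eps > 0" unfolding eps_def using Lp Lpos by simp
  have e1: "eps \<le> 1/2" unfolding eps_def using Lp Lpos assms(4) by (simp add: field_simps)
  have sL: "(1 - eps) * L > l" unfolding eps_def using Lpos Lp by (simp add: field_simps)
  define qs where "qs = shift_after ps i eps"
  define f where "f = (\<lambda>k. if k = i then 1 - eps else 1::real)"
  have len: "length qs = length ps" unfolding qs_def shift_after_def using assms(7) by simp
  have d: "dcc_path \<theta> l ps" using assms(5) by (simp add: discrete_dubins_def)
  have fd: "f k > 0 \<and> qs!(k+1) - qs!k = f k *\<^sub>R (ps!(k+1) - ps!k)" if k: "k+1 < length ps" for k
  proof -
    have "f k > 0" unfolding f_def using e1 by simp
    moreover have "qs!(k+1) - qs!k = f k *\<^sub>R (ps!(k+1) - ps!k)"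
      unfolding qs_def f_def using k assms(7)
      by (cases "k < i"; cases "k = i") (auto simp: shift_nth algebra_simps)
    ultimately show ?thesis by simp
  qed
  have sh: "(edge_len qs k < l) = (edge_len ps k < l)" if k: "k+1 < length ps" for k
  proof -
    have el: "edge_len qs k = f k * edge_len ps k"
      using fd[OF k] by (simp add: edge_len_diff)
    show ?thesis
    proof (cases "k = i")
      case True
      thus ?thesis using el sL Lp unfolding f_def L_def by (simp add: mult.commute)
    next
      case False
      thus ?thesis using el unfolding f_def by simp
    qed
  qed
  have "dcc_path \<theta> l qs" using dcc_transfer[OF len d fd sh] by blast
  thus ?thesis using ep e1 unfolding qs_def by (intro exI[of _ eps]) simp
qed

end
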